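(* Let $\mathbf B=(\mathbf b_1,\dots,\mathbf b_n)\in\mathbb Q^{d\times n}$ be a basis of a lattice $\mathcal{L}$, let $k\in[n]$ and $\alpha>\sqrt n$ be such that $\|\tilde{\mathbf b}_i\|\le\|\tilde{\mathbf b}_j\|/\alpha$ for all $i\le k<j$. If $\mathcal{L}'\subseteq\mathcal{L}$ is a sublattice of rank $\ell\le k$ with \[ \det(\mathcal{L}')<\frac{\alpha}{\sqrt n}\cdot\min_{S\subseteq[n],\,|S|=\ell}\ \prod_{i\in S}\|\tilde{\mathbf b}_i\|, \] then $\mathcal{L}'\subseteq\mathcal{L}(\mathbf b_1,\dots,\mathbf b_k)$.
   Context: Gram–Schmidt orthogonalization: $\tilde{\mathbf b}_1=\mathbf b_1$, $\tilde{\mathbf b}_i=\Pi_{\{\mathbf b_1,\dots,\mathbf b_{i-1}\}^\perp}(\mathbf b_i)$, where $\Pi_{S^\perp}$ is orthogonal projection onto the orthogonal complement of $\mathrm{span}(S)$. $\mathcal{L}(\mathbf v_1,\dots,\mathbf v_k)$ denotes the lattice generated by the vectors. *)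

theory Defs
  imports "HOL-Analysis.Analysis"
begin

text \<open>Vectors are indexed from 0: the paper's b_1..b_n are b 0 .. b (n-1).\<close>

definition lattice_gen :: "(nat \<Rightarrow> 'a::real_vector) \<Rightarrow> nat \<Rightarrow> 'a set" where
  "lattice_gen v m = {x. \<exists>z::nat \<Rightarrow> int. x = (\<Sum>i<m. of_int (z i) *\<^sub>R v i)}"

definition lin_indep_family :: "(nat \<Rightarrow> 'a::real_vector) \<Rightarrow> nat \<Rightarrow> bool" where
  "lin_indep_family v m \<longleftrightarrow> inj_on v {..<m} \<and> independent (v ` {..<m})"

definition gso :: "(nat \<Rightarrow> 'a::real_inner) \<Rightarrow> nat \<Rightarrow> 'a" where
  "gso b i = (THE y. b i - y \<in> span (b ` {..<i}) \<and> (\<forall>x\<in>span (b ` {..<i}). inner y x = 0))"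

definition gram_det :: "(nat \<Rightarrow> 'a::real_inner) \<Rightarrow> nat \<Rightarrow> real" where
  "gram_det v m = (\<Sum>p | p permutes {..<m}. of_int (sign p) * (\<Prod>i<m. inner (v i) (v (p i))))"

definition lattice_det :: "(nat \<Rightarrow> 'a::real_inner) \<Rightarrow> nat \<Rightarrow> real" where
  "lattice_det v m = sqrt (gram_det v m)"

end

theory Submission
  imports Defs "Jordan_Normal_Form.Determinant"
begin

definition gmat :: "(nat \<Rightarrow> 'a::real_inner) \<Rightarrow> nat \<Rightarrow> real mat" where
  "gmat v m = mat m m (\<lambda>(i,j). inner (v i) (v j))"

lemma gmat_carrier[simp]: "gmat v m \<in> carrier_mat m m"
  unfolding gmat_def by simp

lemma gmat_index[simp]: "i < m \<Longrightarrow> j < m \<Longrightarrow> gmat v m $$ (i,j) = inner (v i) (v j)"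
  "dim_row (gmat v m) = m" "dim_col (gmat v m) = m"
  unfolding gmat_def by auto

lemma gram_det_gmat: "gram_det v m = Determinant.det (gmat v m)"
proof -
  have "Determinant.det (gmat v m) = (\<Sum>p | p permutes {0..<m}. of_int (sign p) * (\<Prod>i=0..<m. gmat v m $$ (i,p i)))"
    by (rule det_def'[OF gmat_carrier])
  also have "\<dots> = gram_det v m"
    unfolding gram_det_def atLeast0LessThan
  proof (rule sum.cong[OF refl])
    fix p assume "p \<in> {p. p permutes {..<m}}"
    hence p: "p permutes {..<m}" by simp
    have "(\<Prod>i<m. gmat v m $$ (i,p i)) = (\<Prod>i<m. inner (v i) (v (p i)))"
    proof (rule prod.cong[OF refl])
      fix x assume x: "x \<in> {..<m}"
      hence "p x < m" using permutes_in_image[OF p, of x] by simp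
      thus "gmat v m $$ (x,p x) = inner (v x) (v (p x))" using x by simp
    qed
    thus "of_int (sign p) * (\<Prod>i<m. gmat v m $$ (i,p i)) = of_int (sign p) * (\<Prod>i<m. inner (v i) (v (p i)))" by simp
  qed
  finally show ?thesis by simp
qed

lemma gram_det_cong: assumes "\<And>i. i < m \<Longrightarrow> v i = w i" shows "gram_det v m = gram_det w m"
proof -
  have "gmat v m = gmat w m" by (rule eq_matI) (simp_all add: assms)
  thus ?thesis by (simp add: gram_det_gmat)
qed

lemma gram_det_0[simp]: "gram_det v 0 = 1"
  unfolding gram_det_gmat by (rule det_dim_zero, simp)

lemma gram_add: assumes "i<m" "j<m" "i\<noteq>j"
  shows "gram_det (v(j := v j + q *\<^sub>R v i)) m = gram_det v m"
proof -
  have "gmat (v(j := v j + q *\<^sub>R v i)) m = addcol q j i (addrow q j i (gmat v m))"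
    by (rule eq_matI) (use assms in \<open>auto simp: inner_add inner_commute algebra_simps\<close>)
  thus ?thesis unfolding gram_det_gmat using assms
    by (simp add: det_addrow)
qed

lemma gram_swap: assumes "i<m" "j<m"
  shows "gram_det (v \<circ> Transposition.transpose i j) m = gram_det v m"
proof (cases "i = j")
  case True thus ?thesis by simp
next
  case False
  have "gmat (v \<circ> Transposition.transpose i j) m = swapcols i j (swaprows i j (gmat v m))"
    by (rule eq_matI) (use assms in \<open>auto simp: transpose_def\<close>)
  thus ?thesis unfolding gram_det_gmat using assms False
    by (simp add: det_swaprows det_swapcols)
qed

lemma gram_block: assumes "\<And>i. i<m \<Longrightarrow> inner (v i) (v m) = 0"
  shows "gram_det v (Suc m) = gram_det v m * inner (v m) (v m)"
proof -
  let ?A = "gmat v (Suc m)"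
  have "Determinant.det ?A = (\<Sum>i<Suc m. ?A $$ (i,m) * cofactor ?A i m)"
    by (rule laplace_expansion_column) auto
  also have "\<dots> = ?A $$ (m,m) * cofactor ?A m m"
    by (subst sum.lessThan_Suc) (simp add: assms)
  also have "mat_delete ?A m m = gmat v m"
    by (rule eq_matI) (auto simp: mat_delete_def)
  hence "cofactor ?A m m = Determinant.det (gmat v m)"
    by (simp add: cofactor_def)
  finally show ?thesis by (simp add: gram_det_gmat)
qed

lemma gso_props:
  fixes b :: "nat \<Rightarrow> 'a::euclidean_space"
  shows "b i - gso b i \<in> span (b ` {..<i})" "\<And>x. x \<in> span (b ` {..<i}) \<Longrightarrow> inner (gso b i) x = 0"
proof -
  let ?S = "b ` {..<i}"
  let ?P = "\<lambda>y. b i - y \<in> span ?S \<and> (\<forall>x\<in>span ?S. inner y x = 0)"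
  obtain y z where y: "y \<in> span ?S" and z: "\<And>w. w \<in> span ?S \<Longrightarrow> real_inner_class.orthogonal z w" and yz: "b i = y + z"
    using orthogonal_subspace_decomp_exists[of "b ` {..<i}" "b i"] by blast
  have Pz: "?P z" using y z yz by (auto simp: real_inner_class.orthogonal_def)
  have uniq: "z2 = z" if "?P z2" for z2
  proof -
    have d: "z2 - z \<in> span ?S"
    proof -
      have "z2 - z = (b i - z) - (b i - z2)" by simp
      thus ?thesis using Pz that by (metis span_diff)
    qed
    have "inner (z2 - z) (z2 - z) = inner z2 (z2 - z) - inner z (z2 - z)" by (simp add: inner_diff_left)
    also have "\<dots> = 0" using d that Pz by simp
    finally show ?thesis by simp
  qed
  have "?P (gso b i)" unfolding gso_def by (rule theI[of ?P z, OF Pz uniq])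
  thus "b i - gso b i \<in> span ?S" "\<And>x. x \<in> span ?S \<Longrightarrow> inner (gso b i) x = 0" by auto
qed

lemma proj_exists:
  fixes v :: "nat \<Rightarrow> 'a::euclidean_space"
  obtains w where "w \<in> span (v ` {..<m})" "\<And>x. x \<in> span (v ` {..<m}) \<Longrightarrow> inner (v m - w) x = 0"
proof -
  obtain y z where y: "y \<in> span (v ` {..<m})" and z: "\<And>x. x \<in> span (v ` {..<m}) \<Longrightarrow> real_inner_class.orthogonal z x" and yz: "v m = y + z"
    using orthogonal_subspace_decomp_exists[of "v ` {..<m}" "v m"] by blast
  show ?thesis by (rule that[of y]) (use y z yz in \<open>auto simp: real_inner_class.orthogonal_def\<close>)
qed

lemma gram_proj_inv:
  fixes v :: "nat \<Rightarrow> 'a::euclidean_space"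
  assumes "w \<in> span (v ` {..<m})"
  shows "gram_det (v(m := v m + w)) (Suc m) = gram_det v (Suc m)"
  using assms
proof (induction w rule: span_induct_alt)
  case base
  then show ?case by simp
next
  case (step c x y)
  then obtain i where i: "i < m" "x = v i" by auto
  let ?v' = "v(m := v m + y)"
  have e: "v(m := v m + (c *\<^sub>R x + y)) = ?v'(m := ?v' m + c *\<^sub>R ?v' i)"
    using i by (auto simp: algebra_simps)
  have "gram_det (v(m := v m + (c *\<^sub>R x + y))) (Suc m) = gram_det (?v'(m := ?v' m + c *\<^sub>R ?v' i)) (Suc m)"
    by (simp only: e)
  also have "\<dots> = gram_det ?v' (Suc m)"
    by (rule gram_add) (use i in auto)
  also have "\<dots> = gram_det v (Suc m)" using step by (simp add: fun_upd_def)
  finally show ?case .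
qed

lemma gram_step:
  fixes v :: "nat \<Rightarrow> 'a::euclidean_space"
  assumes w: "w \<in> span (v ` {..<m})" and orth: "\<And>x. x \<in> span (v ` {..<m}) \<Longrightarrow> inner (v m - w) x = 0"
  shows "gram_det v (Suc m) = gram_det v m * inner (v m - w) (v m - w)"
proof -
  let ?v = "v(m := v m + (- w))"
  have "gram_det v (Suc m) = gram_det ?v (Suc m)"
    using gram_proj_inv[of "-w" v m] w by (simp add: span_neg)
  also have "\<dots> = gram_det ?v m * inner (?v m) (?v m)"
  proof (rule gram_block)
    fix i assume "i < m"
    hence "v i \<in> span (v ` {..<m})" by (auto intro: span_base)
    thus "inner (?v i) (?v m) = 0" using orth \<open>i<m\<close> by (simp add: inner_commute)
  qed
  also have "gram_det ?v m = gram_det v m" by (rule gram_det_cong) simp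
  finally show ?thesis by simp
qed

lemma indep_gram:
  fixes c :: "nat \<Rightarrow> 'a::euclidean_space"
  shows "lin_indep_family c l \<Longrightarrow> gram_det c l \<noteq> 0"
proof (induction l)
  case 0
  then show ?case by simp
next
  case (Suc s)
  have inj: "inj_on c {..<Suc s}" and ind: "independent (c ` {..<Suc s})"
    using Suc.prems by (auto simp: lin_indep_family_def)
  have "lin_indep_family c s"
  proof -
    have "c ` {..<s} \<subseteq> c ` {..<Suc s}" by auto
    thus ?thesis unfolding lin_indep_family_def using inj_on_subset[OF inj] independent_mono[OF ind] by auto
  qed
  hence g: "gram_det c s \<noteq> 0" by (rule Suc.IH)
  obtain w where w: "w \<in> span (c ` {..<s})" and orth: "\<And>x. x \<in> span (c ` {..<s}) \<Longrightarrow> inner (c s - w) x = 0"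
    using proj_exists[of c s] by blast
  have "c ` {..<Suc s} - {c s} = c ` {..<s}"
    using inj by (auto simp: inj_on_def less_Suc_eq)
  hence "c s \<notin> span (c ` {..<s})"
    using ind unfolding dependent_def by (metis image_eqI lessI lessThan_iff)
  hence "c s - w \<noteq> 0" using w by auto
  hence "inner (c s - w) (c s - w) \<noteq> 0" by simp
  thus ?case using gram_step[OF w orth] g by simp
qed

lemma lat_zero: "0 \<in> lattice_gen b m"
  unfolding lattice_gen_def by (rule CollectI, rule exI[of _ "\<lambda>_. 0"]) simp

lemma lat_add: "x \<in> lattice_gen b m \<Longrightarrow> y \<in> lattice_gen b m \<Longrightarrow> x + y \<in> lattice_gen b m"
  unfolding lattice_gen_def
proof clarify
  fix zx zy :: "nat \<Rightarrow> int"
  show "\<exists>z. (\<Sum>i<m. of_int (zx i) *\<^sub>R b i) + (\<Sum>i<m. of_int (zy i) *\<^sub>R b i) = (\<Sum>i<m. of_int (z i) *\<^sub>R b i)"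
    by (rule exI[of _ "\<lambda>i. zx i + zy i"]) (simp add: sum.distrib scaleR_add_left)
qed

lemma lat_smult: "x \<in> lattice_gen b m \<Longrightarrow> of_int q *\<^sub>R x \<in> lattice_gen b m"
  unfolding lattice_gen_def
proof clarify
  fix zx :: "nat \<Rightarrow> int"
  show "\<exists>z. of_int q *\<^sub>R (\<Sum>i<m. of_int (zx i) *\<^sub>R b i) = (\<Sum>i<m. of_int (z i) *\<^sub>R b i)"
    by (rule exI[of _ "\<lambda>i. q * zx i"]) (simp add: scaleR_sum_right)
qed

lemma lat_diff: "x \<in> lattice_gen b m \<Longrightarrow> y \<in> lattice_gen b m \<Longrightarrow> x - y \<in> lattice_gen b m"
  using lat_add[of x b m "of_int (-1) *\<^sub>R y"] lat_smult[of y b m "-1"] by simp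

lemma lat_base: assumes "i < m" shows "b i \<in> lattice_gen b m"
  unfolding lattice_gen_def
proof (rule CollectI, rule exI[of _ "\<lambda>j. if j = i then 1 else 0"])
  have "(\<Sum>j<m. of_int (if j = i then 1 else 0) *\<^sub>R b j) = (\<Sum>j<m. if j = i then b j else 0)"
    by (rule sum.cong) auto
  also have "\<dots> = b i" using assms by (simp add: sum.delta')
  finally show "b i = (\<Sum>j<m. of_int (if j = i then 1 else 0) *\<^sub>R b j)" by simp
qed

lemma lat_sum: fixes v :: "nat \<Rightarrow> 'a::real_vector" assumes "\<forall>i<m. v i \<in> lattice_gen b n"
  shows "(\<Sum>i<m. of_int (z i) *\<^sub>R v i) \<in> lattice_gen b n"
  using assms
proof (induction m)
  case 0 then show ?case by (simp add: lat_zero)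
next
  case (Suc m) then show ?case by (simp add: lat_add lat_smult)
qed

lemma lat_sub: fixes v :: "nat \<Rightarrow> 'a::real_vector" assumes "\<forall>i<m. v i \<in> lattice_gen b n"
  shows "lattice_gen v m \<subseteq> lattice_gen b n"
  using lat_sum[OF assms] unfolding lattice_gen_def[of v m] by auto

lemma lat_mono: "m \<le> m' \<Longrightarrow> lattice_gen b m \<subseteq> lattice_gen b m'"
  by (rule lat_sub) (auto intro: lat_base)

lemma lat_span: "lattice_gen b m \<subseteq> span (b ` {..<m})"
  unfolding lattice_gen_def
proof clarify
  fix z :: "nat \<Rightarrow> int"
  show "(\<Sum>i<m. of_int (z i) *\<^sub>R b i) \<in> span (b ` {..<m})"
    by (rule span_sum, rule span_scale, rule span_base, auto)
qed

lemma lat_0: "lattice_gen b 0 = {0}"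
  unfolding lattice_gen_def by simp

lemma lat_Suc: assumes "x \<in> lattice_gen b (Suc m)"
  shows "\<exists>q::int. x - of_int q *\<^sub>R b m \<in> lattice_gen b m"
proof -
  obtain z where "x = (\<Sum>i<Suc m. of_int (z i) *\<^sub>R b i)" using assms unfolding lattice_gen_def by auto
  hence "x - of_int (z m) *\<^sub>R b m = (\<Sum>i<m. of_int (z i) *\<^sub>R b i)" by simp
  thus ?thesis unfolding lattice_gen_def by blast
qed

lemma euclid:
  fixes c :: "nat \<Rightarrow> 'a::euclidean_space" and z :: "nat \<Rightarrow> int"
  assumes "\<forall>j<l. c j - of_int (z j) *\<^sub>R b m \<in> lattice_gen b m" "\<exists>j<l. z j \<noteq> 0"
  shows "\<exists>c' z' r. r<l \<and> gram_det c' l = gram_det c l \<and> (\<forall>j<l. c' j - of_int (z' j) *\<^sub>R b m \<in> lattice_gen b m)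
     \<and> z' r \<noteq> 0 \<and> (\<forall>j<l. j \<noteq> r \<longrightarrow> z' j = 0)"
  using assms
proof (induction "\<Sum>j<l. nat \<bar>z j\<bar>" arbitrary: c z rule: less_induct)
  case less
  show ?case
  proof (cases "\<exists>i<l. \<exists>j<l. i \<noteq> j \<and> z i \<noteq> 0 \<and> z j \<noteq> 0 \<and> \<bar>z i\<bar> \<le> \<bar>z j\<bar>")
    case True
    then obtain i j where ij: "i<l" "j<l" "i\<noteq>j" "z i \<noteq> 0" "z j \<noteq> 0" "\<bar>z i\<bar> \<le> \<bar>z j\<bar>" by blast
    define q :: int where "q = (if (z i > 0) = (z j > 0) then 1 else -1)"
    define c2 where "c2 = c(j := c j + (- of_int q) *\<^sub>R c i)"
    define z2 where "z2 = z(j := z j - q * z i)"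
    have abs2: "\<bar>z j - q * z i\<bar> < \<bar>z j\<bar>" using ij unfolding q_def by auto
    have s1: "(\<Sum>t<l. nat \<bar>z2 t\<bar>) = nat \<bar>z2 j\<bar> + (\<Sum>t\<in>{..<l}-{j}. nat \<bar>z2 t\<bar>)"
      by (rule sum.remove) (use ij in auto)
    have s2: "(\<Sum>t\<in>{..<l}-{j}. nat \<bar>z2 t\<bar>) = (\<Sum>t\<in>{..<l}-{j}. nat \<bar>z t\<bar>)"
      by (rule sum.cong) (auto simp: z2_def)
    have s3: "(\<Sum>t<l. nat \<bar>z t\<bar>) = nat \<bar>z j\<bar> + (\<Sum>t\<in>{..<l}-{j}. nat \<bar>z t\<bar>)"
      by (rule sum.remove) (use ij in auto)
    have "nat \<bar>z2 j\<bar> < nat \<bar>z j\<bar>" using abs2 by (simp add: z2_def)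
    hence lt: "(\<Sum>t<l. nat \<bar>z2 t\<bar>) < (\<Sum>t<l. nat \<bar>z t\<bar>)" using s1 s2 s3 by linarith
    have g: "gram_det c2 l = gram_det c l" unfolding c2_def by (rule gram_add) (use ij in auto)
    have inv: "\<forall>t<l. c2 t - of_int (z2 t) *\<^sub>R b m \<in> lattice_gen b m"
    proof (intro allI impI)
      fix t assume t: "t < l"
      show "c2 t - of_int (z2 t) *\<^sub>R b m \<in> lattice_gen b m"
      proof (cases "t = j")
        case True
        have "c2 t - of_int (z2 t) *\<^sub>R b m = (c j - of_int (z j) *\<^sub>R b m) + of_int (-q) *\<^sub>R (c i - of_int (z i) *\<^sub>R b m)"
          using True by (simp add: c2_def z2_def algebra_simps)
        thus ?thesis using less.prems(1) ij by (simp add: lat_add lat_smult del: of_int_minus)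
      next
        case False
        thus ?thesis using less.prems(1) t by (simp add: c2_def z2_def)
      qed
    qed
    have nz: "\<exists>t<l. z2 t \<noteq> 0" using ij by (auto simp: z2_def intro!: exI[of _ i])
    obtain c' z' r where "r<l \<and> gram_det c' l = gram_det c2 l \<and> (\<forall>j<l. c' j - of_int (z' j) *\<^sub>R b m \<in> lattice_gen b m)
     \<and> z' r \<noteq> 0 \<and> (\<forall>j<l. j \<noteq> r \<longrightarrow> z' j = 0)"
      using less.hyps[OF lt inv nz] by blast
    thus ?thesis using g by metis
  next
    case False
    obtain r where r: "r < l" "z r \<noteq> 0" using less.prems(2) by blast
    have "\<forall>j<l. j \<noteq> r \<longrightarrow> z j = 0"
    proof (intro allI impI, rule ccontr)
      fix j assume "j < l" "j \<noteq> r" "z j \<noteq> 0"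
      thus False using False r by (cases "\<bar>z r\<bar> \<le> \<bar>z j\<bar>") (metis, force)
    qed
    thus ?thesis using r less.prems(1) by blast
  qed
qed

lemma ybound:
  fixes b :: "nat \<Rightarrow> 'a::euclidean_space"
  assumes u: "u \<in> span (b ` {..<m})" and g: "g \<noteq> 0"
  shows "inner (gso b m) (gso b m) \<le> inner (of_int g *\<^sub>R gso b m + u) (of_int g *\<^sub>R gso b m + u)"
proof -
  let ?G = "gso b m"
  have o: "inner ?G u = 0" using gso_props(2)[OF u] .
  have "inner (of_int g *\<^sub>R ?G + u) (of_int g *\<^sub>R ?G + u) = (of_int g)^2 * inner ?G ?G + inner u u"
    using o by (simp add: inner_add inner_commute power2_eq_square algebra_simps)
  moreover have a: "1 \<le> \<bar>real_of_int g\<bar>" using g by (cases "g > 0") auto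
  hence "1 \<le> (real_of_int g)^2" by (metis one_le_power power2_abs)
  hence "inner ?G ?G \<le> (of_int g)^2 * inner ?G ?G"
    using mult_right_mono[of 1 "(real_of_int g)^2" "inner ?G ?G"] by simp
  moreover have "0 \<le> inner u u" by simp
  ultimately show ?thesis by linarith
qed

lemma main:
  fixes b c :: "nat \<Rightarrow> 'a::euclidean_space"
  assumes "\<forall>j<l. c j \<in> lattice_gen b n" "gram_det c l \<noteq> 0"
  shows "\<exists>P \<subseteq> {..<n}. card P = l \<and> (\<Prod>i\<in>P. norm (gso b i)^2) \<le> gram_det c l \<and>
           ((\<forall>j<l. c j \<in> lattice_gen b k) \<or> (\<exists>p\<in>P. k \<le> p))"
  using assms
proof (induction n arbitrary: c l)
  case 0
  show ?case
  proof (cases l)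
    case 0 then show ?thesis by (intro exI[of _ "{}"]) auto
  next
    case (Suc s)
    have c0: "c 0 = 0" using 0 Suc by (auto simp: lat_0)
    have "gram_det c l = 0" unfolding gram_det_def
    proof (rule sum.neutral, rule ballI)
      fix p
      have "(\<Prod>i<l. inner (c i) (c (p i))) = 0"
        by (rule prod_zero) (use c0 Suc in \<open>auto intro!: bexI[of _ 0]\<close>)
      thus "of_int (sign p) * (\<Prod>i<l. inner (c i) (c (p i))) = 0" by simp
    qed
    thus ?thesis using "0.prems"(2) by simp
  qed
next
  case (Suc m)
  show ?case
  proof (cases "\<forall>j<l. c j \<in> lattice_gen b m")
    case True
    from Suc.IH[OF True Suc.prems(2)] obtain P where
      "P \<subseteq> {..<m}" "card P = l" "(\<Prod>i\<in>P. norm (gso b i)^2) \<le> gram_det c l"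
      "(\<forall>j<l. c j \<in> lattice_gen b k) \<or> (\<exists>p\<in>P. k \<le> p)" by blast
    thus ?thesis by (intro exI[of _ P]) auto
  next
    case False
    then obtain j0 where j0: "j0 < l" "c j0 \<notin> lattice_gen b m" by blast
    define z where "z j = (SOME q::int. c j - of_int q *\<^sub>R b m \<in> lattice_gen b m)" for j
    have z: "\<forall>j<l. c j - of_int (z j) *\<^sub>R b m \<in> lattice_gen b m"
    proof (intro allI impI)
      fix j assume "j < l"
      hence "\<exists>q::int. c j - of_int q *\<^sub>R b m \<in> lattice_gen b m" using Suc.prems(1) lat_Suc by blast
      thus "c j - of_int (z j) *\<^sub>R b m \<in> lattice_gen b m" unfolding z_def by (rule someI_ex)
    qed
    have nz: "\<exists>j<l. z j \<noteq> 0"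
    proof (rule ccontr)
      assume "\<not> (\<exists>j<l. z j \<noteq> 0)"
      hence "z j0 = 0" using j0 by blast
      thus False using z j0 by auto
    qed
    obtain c' z' r where r: "r<l" and gc': "gram_det c' l = gram_det c l"
      and cz': "\<forall>j<l. c' j - of_int (z' j) *\<^sub>R b m \<in> lattice_gen b m"
      and zr: "z' r \<noteq> 0" and z0: "\<forall>j<l. j \<noteq> r \<longrightarrow> z' j = 0"
      using euclid[OF z nz] by blast
    obtain s where ls: "l = Suc s" using j0 by (cases l) auto
    define c2 where "c2 = c' \<circ> Transposition.transpose r s"
    have gc2: "gram_det c2 l = gram_det c l"
      unfolding c2_def using gram_swap[of r l s c'] r ls gc' by simp
    have low: "\<forall>j<s. c2 j \<in> lattice_gen b m"
    proof (intro allI impI)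
      fix j assume j: "j < s"
      show "c2 j \<in> lattice_gen b m"
      proof (cases "j = r")
        case True
        hence "c2 j = c' s" using j by (simp add: c2_def transpose_def)
        moreover have "z' s = 0" using z0 True j ls by auto
        ultimately show ?thesis using cz' ls by auto
      next
        case False
        hence "c2 j = c' j" using j by (simp add: c2_def transpose_def)
        moreover have "z' j = 0" using z0 False j ls by auto
        ultimately show ?thesis using cz' ls j by (metis add_0 less_SucI scale_zero_left diff_zero of_int_0)
      qed
    qed
    have top: "c2 s - of_int (z' r) *\<^sub>R b m \<in> lattice_gen b m"
    proof -
      have "c2 s = c' r" by (simp add: c2_def transpose_def)
      thus ?thesis using cz' r by simp
    qed
    obtain w where w: "w \<in> span (c2 ` {..<s})" and orth: "\<And>x. x \<in> span (c2 ` {..<s}) \<Longrightarrow> inner (c2 s - w) x = 0"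
      using proj_exists[of c2 s] by blast
    let ?y = "c2 s - w"
    have step: "gram_det c2 l = gram_det c2 s * inner ?y ?y"
      using gram_step[OF w orth] ls by simp
    have ne: "gram_det c2 s \<noteq> 0" using step gc2 Suc.prems(2) by auto
    from Suc.IH[OF low ne] obtain P' where P': "P' \<subseteq> {..<m}" "card P' = s"
      "(\<Prod>i\<in>P'. norm (gso b i)^2) \<le> gram_det c2 s" by blast
    have spsub: "span (c2 ` {..<s}) \<subseteq> span (b ` {..<m})"
    proof (rule span_minimal[OF _ subspace_span])
      show "c2 ` {..<s} \<subseteq> span (b ` {..<m})" using low lat_span by blast
    qed
    define u where "u = (c2 s - of_int (z' r) *\<^sub>R b m) + of_int (z' r) *\<^sub>R (b m - gso b m) - w"
    have a1: "c2 s - of_int (z' r) *\<^sub>R b m \<in> span (b ` {..<m})" using top lat_span by blast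
    have a2: "of_int (z' r) *\<^sub>R (b m - gso b m) \<in> span (b ` {..<m})" by (rule span_scale[OF gso_props(1)])
    have a3: "w \<in> span (b ` {..<m})" using w spsub by blast
    have u: "u \<in> span (b ` {..<m})" unfolding u_def by (rule span_diff[OF span_add[OF a1 a2] a3])
    have yu: "?y = of_int (z' r) *\<^sub>R gso b m + u" unfolding u_def by (simp add: algebra_simps)
    have yb: "norm (gso b m)^2 \<le> inner ?y ?y"
      using ybound[OF u zr] yu by (simp add: power2_norm_eq_inner)
    define P where "P = insert m P'"
    have mP: "m \<notin> P'" using P' by auto
    have fin: "finite P'" using P' finite_subset by blast
    have prodP: "(\<Prod>i\<in>P. norm (gso b i)^2) = norm (gso b m)^2 * (\<Prod>i\<in>P'. norm (gso b i)^2)"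
      unfolding P_def using fin mP by simp
    have "(\<Prod>i\<in>P. norm (gso b i)^2) \<le> inner ?y ?y * gram_det c2 s"
      unfolding prodP by (rule mult_mono[OF yb P'(3)]) (auto intro: prod_nonneg)
    hence pb: "(\<Prod>i\<in>P. norm (gso b i)^2) \<le> gram_det c l" using step gc2 by (simp add: mult.commute)
    have cardP: "card P = l" unfolding P_def using fin mP P' ls by simp
    have Psub: "P \<subseteq> {..<Suc m}" unfolding P_def using P' by auto
    have cond: "(\<forall>j<l. c j \<in> lattice_gen b k) \<or> (\<exists>p\<in>P. k \<le> p)"
    proof (cases "k \<le> m")
      case True thus ?thesis unfolding P_def by auto
    next
      case False
      hence "lattice_gen b (Suc m) \<subseteq> lattice_gen b k" by (intro lat_mono) auto
      thus ?thesis using Suc.prems(1) by blast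
    qed
    show ?thesis using Psub cardP pb cond by blast
  qed
qed

theorem mainTheorem15:
  fixes b :: "nat \<Rightarrow> real ^ 'd" and c :: "nat \<Rightarrow> real ^ 'd"
    and n k l :: nat and \<alpha> :: real
  assumes rat: "\<forall>i<n. \<forall>j. b i $ j \<in> \<rat>"
    and basis: "lin_indep_family b n"
    and k: "1 \<le> k" "k \<le> n"
    and alpha: "\<alpha> > sqrt (real n)"
    and gap: "\<forall>i j. i < k \<longrightarrow> k \<le> j \<longrightarrow> j < n \<longrightarrow> norm (gso b i) \<le> norm (gso b j) / \<alpha>"
    and subbasis: "lin_indep_family c l"
    and sub: "lattice_gen c l \<subseteq> lattice_gen b n"
    and l: "l \<le> k"
    and det: "lattice_det c l < \<alpha> / sqrt (real n) *
               Min ((\<lambda>S. \<Prod>i\<in>S. norm (gso b i)) ` {S. S \<subseteq> {..<n} \<and> card S = l})"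
  shows "lattice_gen c l \<subseteq> lattice_gen b k"
proof (rule ccontr)
  assume notsub: "\<not> lattice_gen c l \<subseteq> lattice_gen b k"
  let ?N = "\<lambda>i. norm (gso b i)"
  have cL: "\<forall>j<l. c j \<in> lattice_gen b n" using lat_base[of _ l c] sub by blast
  have notk: "\<not> (\<forall>j<l. c j \<in> lattice_gen b k)" using lat_sub notsub by blast
  have g: "gram_det c l \<noteq> 0" by (rule indep_gram[OF subbasis])
  obtain P where P: "P \<subseteq> {..<n}" "card P = l" "(\<Prod>i\<in>P. ?N i ^2) \<le> gram_det c l"
    and "(\<forall>j<l. c j \<in> lattice_gen b k) \<or> (\<exists>p\<in>P. k \<le> p)"
    using main[OF cL g, of k] by blast
  with notk obtain p where p: "p \<in> P" "k \<le> p" by blast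
  have pn: "p < n" using p P by auto
  have finP: "finite P" using P finite_subset by blast
  have cP1: "card (P - {p}) = l - 1" using p finP P by simp
  have l1: "1 \<le> l" using P p finP by (metis One_nat_def Suc_leI card_gt_0_iff empty_iff)
  obtain i where i: "i < k" "i \<notin> P"
  proof (rule ccontr)
    assume "\<not> thesis"
    hence "{..<k} \<subseteq> P - {p}" using that p by auto
    hence "card {..<k} \<le> card (P - {p})" using finP by (intro card_mono) auto
    thus False using cP1 l l1 by simp
  qed
  define S where "S = insert i (P - {p})"
  have iS: "i \<notin> P - {p}" using i by auto
  have Ssub: "S \<subseteq> {..<n}" unfolding S_def using P i k by auto
  have cS: "card S = l" unfolding S_def using iS finP cP1 l1 by simp
  have alpha_pos: "\<alpha> > 0" using alpha by (metis real_sqrt_ge_zero of_nat_0_le_iff le_less_trans)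
  have gi: "?N i \<le> ?N p / \<alpha>" using gap i p pn by blast
  hence gi': "\<alpha> * ?N i \<le> ?N p" using alpha_pos by (simp add: field_simps)
  have q0: "0 \<le> (\<Prod>j\<in>P - {p}. ?N j)" by (rule prod_nonneg) auto
  have prP: "(\<Prod>j\<in>P. ?N j) = ?N p * (\<Prod>j\<in>P - {p}. ?N j)" using finP p by (simp add: prod.remove)
  have prS: "(\<Prod>j\<in>S. ?N j) = ?N i * (\<Prod>j\<in>P - {p}. ?N j)" unfolding S_def using finP iS by simp
  have "\<alpha> * (\<Prod>j\<in>S. ?N j) \<le> (\<Prod>j\<in>P. ?N j)"
    unfolding prP prS using mult_right_mono[OF gi' q0] by (simp add: mult.assoc)
  define A where "A = (\<lambda>S. \<Prod>i\<in>S. norm (gso b i)) ` {S. S \<subseteq> {..<n} \<and> card S = l}"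
  have finA: "finite A" unfolding A_def
    by (rule finite_imageI, rule finite_subset[of _ "Pow {..<n}"]) auto
  have SA: "(\<Prod>j\<in>S. ?N j) \<in> A" unfolding A_def using Ssub cS by blast
  have minle: "Min A \<le> (\<Prod>j\<in>S. ?N j)" by (rule Min_le[OF finA SA])
  have min0: "0 \<le> Min A"
  proof -
    have "A \<noteq> {}" using SA by auto
    hence "Min A \<in> A" using finA by simp
    moreover have "\<And>x. x \<in> A \<Longrightarrow> 0 \<le> x" unfolding A_def by (auto intro!: prod_nonneg)
    ultimately show ?thesis by blast
  qed
  have "(\<Prod>j\<in>P. ?N j ^2) = (\<Prod>j\<in>P. ?N j) ^2" by (simp add: prod_power_distrib)
  hence "sqrt ((\<Prod>j\<in>P. ?N j)^2) \<le> sqrt (gram_det c l)" using P(3) by (intro real_sqrt_le_mono) simp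
  hence ld: "(\<Prod>j\<in>P. ?N j) \<le> lattice_det c l" unfolding lattice_det_def
    by (simp add: prod_nonneg)
  have sn: "1 \<le> sqrt (real n)" using k by simp
  have "\<alpha> / sqrt (real n) * Min A \<le> \<alpha> * Min A"
  proof (rule mult_right_mono[OF _ min0])
    show "\<alpha> / sqrt (real n) \<le> \<alpha>" using sn alpha_pos by (simp add: divide_le_eq mult_le_cancel_left1)
  qed
  also have "\<dots> \<le> \<alpha> * (\<Prod>j\<in>S. ?N j)" using minle alpha_pos by simp
  also have "\<dots> \<le> (\<Prod>j\<in>P. ?N j)" by fact
  also have "\<dots> \<le> lattice_det c l" by (rule ld)
  finally show False using det unfolding A_def by simp
qed

end
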